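(* Let $S$ be a connected shape in the triangular grid $G$ and let $h$ be a hole point of $S$. Then there exist points $v_1, v_2 \in S$ such that $h$ lies on a shortest path (in $G$) between $v_1$ and $v_2$.
   Context: The triangular grid $G$ is the infinite graph whose vertices ("points") are the points of the regular triangular lattice in the plane, two points being adjacent iff they are at unit distance; every point has exactly six neighbors. A shape is a finite set of points of $G$, identified with the subgraph of $G$ it induces. A connected shape $S$ partitions the plane into faces (regions bounded by its points and edges), exactly one of which is unbounded (the outer face). A bounded face containing at least one grid point not in $S$ is a hole of $S$; the grid points lying in holes of $S$ are called hole points of $S$. *)

theory Defs
  imports "HOL-Analysis.Analysis"
begin

text \<open>Points of the triangular grid in axial coordinates: the pair (a,b) denotes
  the plane point a + b*omega with omega = exp(i*pi/3).\<close>

type_synonym gpoint = "int \<times> int"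

definition omega :: complex where
  "omega = Complex (1/2) (sqrt 3 / 2)"

definition emb :: "gpoint \<Rightarrow> complex" where
  "emb p = of_int (fst p) + of_int (snd p) * omega"

definition gadj :: "gpoint \<Rightarrow> gpoint \<Rightarrow> bool" where
  "gadj p q \<longleftrightarrow> (fst q - fst p, snd q - snd p) \<in>
     {(1,0), (-1,0), (0,1), (0,-1), (1,-1), (-1,1)}"

definition gwalk :: "gpoint list \<Rightarrow> bool" where
  "gwalk ps \<longleftrightarrow> ps \<noteq> [] \<and> successively gadj ps"

definition gdist :: "gpoint \<Rightarrow> gpoint \<Rightarrow> nat" where
  "gdist u v = (LEAST n. \<exists>ps. gwalk ps \<and> hd ps = u \<and> last ps = v \<and> length ps = n + 1)"

definition shortest_path :: "gpoint list \<Rightarrow> gpoint \<Rightarrow> gpoint \<Rightarrow> bool" where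
  "shortest_path ps u v \<longleftrightarrow>
     gwalk ps \<and> hd ps = u \<and> last ps = v \<and> length ps = gdist u v + 1"

definition connected_shape :: "gpoint set \<Rightarrow> bool" where
  "connected_shape S \<longleftrightarrow> finite S \<and> S \<noteq> {} \<and>
     (\<forall>p\<in>S. \<forall>q\<in>S. \<exists>ps. gwalk ps \<and> set ps \<subseteq> S \<and> hd ps = p \<and> last ps = q)"

definition drawing :: "gpoint set \<Rightarrow> complex set" where
  "drawing S = emb ` S \<union>
     \<Union>{closed_segment (emb p) (emb q) | p q. p \<in> S \<and> q \<in> S \<and> gadj p q}"

text \<open>Hole point: a grid point not in S lying in a bounded face, i.e. in a bounded
  connected component of the complement of the drawing.\<close>
definition hole_point :: "gpoint set \<Rightarrow> gpoint \<Rightarrow> bool" where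
  "hole_point S h \<longleftrightarrow> h \<notin> S \<and> emb h \<notin> drawing S \<and>
     bounded (connected_component_set (- drawing S) (emb h))"

end

theory Submission
  imports Defs
begin

lemma Im_emb: "Im (emb p) = of_int (snd p) * (sqrt 3 / 2)"
  by (simp add: emb_def omega_def)

lemma Re_emb: "Re (emb p) = of_int (fst p) + of_int (snd p) / 2"
  by (simp add: emb_def omega_def)

lemma walk_fst_bound:
  "ps \<noteq> [] \<Longrightarrow> successively gadj ps \<Longrightarrow>
   \<bar>fst (last ps) - fst (hd ps)\<bar> \<le> int (length ps) - 1"
proof (induction ps)
  case Nil then show ?case by simp
next
  case (Cons x xs)
  show ?case
  proof (cases "xs = []")
    case True then show ?thesis by simp
  next
    case False
    then obtain y ys where xs: "xs = y # ys" by (cases xs) auto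
    have g: "gadj x y" and s: "successively gadj xs" using Cons.prems xs by auto
    have "\<bar>fst (last xs) - fst (hd xs)\<bar> \<le> int (length xs) - 1" using Cons.IH s False by blast
    moreover have "\<bar>fst y - fst x\<bar> \<le> 1" using g unfolding gadj_def by auto
    ultimately show ?thesis using xs by auto
  qed
qed

lemma line_walk:
  "gwalk (map (\<lambda>k. (x + int k, y)) [0..<Suc n])"
proof (induction n)
  case 0 then show ?case by (simp add: gwalk_def)
next
  case (Suc n)
  have e: "[0..<Suc (Suc n)] = [0..<Suc n] @ [Suc n]" by simp
  show ?case using Suc unfolding gwalk_def e
    by (auto simp: successively_append_iff gadj_def last_map)
qed

lemma line_shortest:
  fixes a b :: int
  assumes "a > 0" "b > 0"
  shows "\<exists>ps. shortest_path ps (x - a, y) (x + b, y) \<and> (x, y) \<in> set ps"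
proof -
  define n where "n = nat (a + b)"
  define ps where "ps = map (\<lambda>k. (x - a + int k, y)) [0..<Suc n]"
  have w: "gwalk ps" unfolding ps_def by (rule line_walk)
  have hd: "hd ps = (x - a, y)" unfolding ps_def by (simp add: hd_map del: upt_Suc)
  have lst: "last ps = (x + b, y)" unfolding ps_def n_def using assms by (simp add: last_map del: upt_Suc)
  have len: "length ps = n + 1" unfolding ps_def by simp
  have mem: "(x, y) \<in> set ps" unfolding ps_def n_def using assms
    by (auto simp: image_iff intro!: bexI[where x="nat a"])
  have "gdist (x - a, y) (x + b, y) = n"
    unfolding gdist_def
  proof (rule Least_equality)
    show "\<exists>ps. gwalk ps \<and> hd ps = (x - a, y) \<and> last ps = (x + b, y) \<and> length ps = n + 1"
      using w hd lst len by blast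
  next
    fix m assume "\<exists>ps. gwalk ps \<and> hd ps = (x - a, y) \<and> last ps = (x + b, y) \<and> length ps = m + 1"
    then obtain qs where q: "gwalk qs" "hd qs = (x - a, y)" "last qs = (x + b, y)" "length qs = m + 1"
      by blast
    have "\<bar>fst (last qs) - fst (hd qs)\<bar> \<le> int (length qs) - 1"
      using q(1) walk_fst_bound unfolding gwalk_def by blast
    then show "n \<le> m" using q assms unfolding n_def by simp
  qed
  then show ?thesis unfolding shortest_path_def using w hd lst len mem by auto
qed

lemma not_in_drawing:
  fixes s :: int
  assumes s: "s = 1 \<or> s = -1"
    and neg: "\<And>p. p \<in> S \<Longrightarrow> snd p = snd h \<Longrightarrow> s * (fst p - fst h) < 0"
    and zi: "Im z = Im (emb h)" and zr: "of_int s * (Re z - Re (emb h)) \<ge> 0"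
  shows "z \<notin> drawing S"
proof
  have c: "sqrt 3 / 2 > (0::real)" by simp
  have pt: False if p: "p \<in> S" "z = emb p" for p
  proof -
    have "real_of_int (snd p) * (sqrt 3 / 2) = real_of_int (snd h) * (sqrt 3 / 2)"
      using zi p by (simp add: Im_emb)
    then have sp: "snd p = snd h" using c by simp
    have "of_int s * (of_int (fst p) - of_int (fst h)) \<ge> (0::real)"
      using zr p sp by (simp add: Re_emb)
    then have "real_of_int (s * (fst p - fst h)) \<ge> real_of_int 0" by simp
    then have "s * (fst p - fst h) \<ge> 0" by (simp only: of_int_le_iff)
    then show False using neg[OF p(1) sp] by simp
  qed
  assume "z \<in> drawing S"
  then consider "z \<in> emb ` S"
    | p q where "p \<in> S" "q \<in> S" "gadj p q" "z \<in> closed_segment (emb p) (emb q)"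
    unfolding drawing_def by blast
  then show False
  proof cases
    case 1 then show False using pt by blast
  next
    case 2
    then obtain u where u: "0 \<le> u" "u \<le> 1" "z = (1 - u) *\<^sub>R emb p + u *\<^sub>R emb q"
      unfolding closed_segment_def by blast
    have imz: "Im z = ((1 - u) * of_int (snd p) + u * of_int (snd q)) * (sqrt 3 / 2)"
    proof -
      have "Im z = (1 - u) * Im (emb p) + u * Im (emb q)" using u(3) by simp
      then show ?thesis unfolding Im_emb by (simp only: distrib_right mult.assoc)
    qed
    have rez: "Re z = (1 - u) * (of_int (fst p) + of_int (snd p) / 2) + u * (of_int (fst q) + of_int (snd q) / 2)"
    proof -
      have "Re z = (1 - u) * Re (emb p) + u * Re (emb q)" using u(3) by simp
      then show ?thesis by (simp add: Re_emb)
    qed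
    have eqi: "(1 - u) * of_int (snd p) + u * of_int (snd q) = real_of_int (snd h)"
      using imz zi c by (simp add: Im_emb)
    have d: "snd q - snd p \<in> {-1, 0, 1}" using 2(3) unfolding gadj_def by auto
    show False
    proof (cases "snd q = snd p")
      case True
      then have sp: "snd p = snd h" using eqi by (simp add: algebra_simps)
      then have sq: "snd q = snd h" using True by simp
      have np0: "s * (fst p - fst h) \<le> -1" using neg[OF 2(1) sp] by simp
      have np: "real_of_int s * (of_int (fst p) - of_int (fst h)) \<le> -1"
      proof -
        have "real_of_int (s * (fst p - fst h)) \<le> real_of_int (-1)" using np0 by (simp only: of_int_le_iff)
        then show ?thesis by simp
      qed
      have nq0: "s * (fst q - fst h) \<le> -1" using neg[OF 2(2) sq] by simp
      have nq: "real_of_int s * (of_int (fst q) - of_int (fst h)) \<le> -1"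
      proof -
        have "real_of_int (s * (fst q - fst h)) \<le> real_of_int (-1)" using nq0 by (simp only: of_int_le_iff)
        then show ?thesis by simp
      qed
      have "of_int s * (Re z - Re (emb h)) = (1 - u) * (real_of_int s * (of_int (fst p) - of_int (fst h)))
          + u * (real_of_int s * (of_int (fst q) - of_int (fst h)))"
      proof -
        have r1: "Re z - Re (emb h) = (1 - u) * (of_int (fst p) - of_int (fst h)) + u * (of_int (fst q) - of_int (fst h))"
          using rez sp sq by (simp add: Re_emb field_simps)
        show ?thesis unfolding r1 by (simp add: algebra_simps)
      qed
      also have "\<dots> \<le> (1 - u) * (-1) + u * (-1)"
        using np nq u by (intro add_mono mult_left_mono) auto
      finally show False using zr by simp
    next
      case False
      then have "snd q = snd p + 1 \<or> snd q = snd p - 1" using d by auto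
      then have "u = 0 \<or> u = 1"
      proof
        assume a: "snd q = snd p + 1"
        then have sq: "real_of_int (snd q) = of_int (snd p) + 1" by simp
        have "(1 - u) * of_int (snd p) + u * (of_int (snd p) + 1) = real_of_int (snd h)"
          using eqi unfolding sq .
        then have "real_of_int (snd h) = of_int (snd p) + u" by (simp add: algebra_simps)
        then have uk: "u = of_int (snd h - snd p)" by simp
        then have "0 \<le> snd h - snd p" "snd h - snd p \<le> 1" using u(1,2) by linarith+
        then have "snd h - snd p = 0 \<or> snd h - snd p = 1" by linarith
        then show ?thesis using uk by auto
      next
        assume a: "snd q = snd p - 1"
        then have sq: "real_of_int (snd q) = of_int (snd p) - 1" by simp
        have "(1 - u) * of_int (snd p) + u * (of_int (snd p) - 1) = real_of_int (snd h)"
          using eqi unfolding sq .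
        then have "real_of_int (snd h) = of_int (snd p) - u" by (simp add: algebra_simps)
        then have uk: "u = of_int (snd p - snd h)" by simp
        then have "0 \<le> snd p - snd h" "snd p - snd h \<le> 1" using u(1,2) by linarith+
        then have "snd p - snd h = 0 \<or> snd p - snd h = 1" by linarith
        then show ?thesis using uk by auto
      qed
      then show False
      proof
        assume "u = 0" then show False using pt[OF 2(1)] u(3) by simp
      next
        assume "u = 1" then show False using pt[OF 2(2)] u(3) by simp
      qed
    qed
  qed
qed

lemma ray:
  fixes s :: int
  assumes hole: "hole_point S h" and s: "s = 1 \<or> s = -1"
  shows "\<exists>k>0. (fst h + s * k, snd h) \<in> S"
proof (rule ccontr)
  assume nk: "\<not> (\<exists>k>0. (fst h + s * k, snd h) \<in> S)"
  have neg: "s * (fst p - fst h) < 0" if p: "p \<in> S" "snd p = snd h" for p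
  proof (rule ccontr)
    assume "\<not> ?thesis"
    then have ge: "s * (fst p - fst h) \<ge> 0" by simp
    have "p \<noteq> h" using hole p(1) unfolding hole_point_def by auto
    then have "fst p \<noteq> fst h" using p(2) by (cases p, cases h) auto
    then have gt: "s * (fst p - fst h) > 0" using ge s by auto
    have "fst h + s * (s * (fst p - fst h)) = fst p" using s by auto
    then have "(fst h + s * (s * (fst p - fst h)), snd h) \<in> S" using p by (cases p) auto
    then show False using nk gt by blast
  qed
  define R where "R = (\<lambda>t::real. emb h + complex_of_real (of_int s * t)) ` {0..}"
  have conn: "connected R" unfolding R_def
    by (intro connected_continuous_image continuous_intros) simp
  have hR: "emb h \<in> R" unfolding R_def by (rule image_eqI[where x=0]) auto
  have sub: "R \<subseteq> - drawing S"
  proof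
    fix z assume "z \<in> R"
    then obtain t where t: "t \<ge> 0" "z = emb h + of_real (of_int s * t)" unfolding R_def by auto
    have "Im z = Im (emb h)" using t by simp
    moreover have "of_int s * (Re z - Re (emb h)) \<ge> 0" using t s by auto
    ultimately show "z \<in> - drawing S" using not_in_drawing[OF s neg] by blast
  qed
  have "R \<subseteq> connected_component_set (- drawing S) (emb h)"
    by (rule connected_component_maximal[OF hR conn sub])
  then have "bounded R" using hole unfolding hole_point_def using bounded_subset by blast
  then obtain B where B: "\<forall>x\<in>R. norm x \<le> B" unfolding bounded_iff by blast
  define t where "t = B + norm (emb h) + 1"
  have "norm (emb h) \<le> B" using B hR by blast
  then have t0: "t \<ge> 0" unfolding t_def by (smt (verit) norm_ge_zero)
  then have z: "emb h + of_real (of_int s * t) \<in> R" unfolding R_def by blast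
  have nt: "norm (of_real (of_int s * t) :: complex) = t" using s t0 by auto
  have "norm (of_real (of_int s * t) :: complex) \<le> norm (emb h + of_real (of_int s * t)) + norm (emb h)"
    using norm_triangle_ineq4[of "emb h + of_real (of_int s * t)" "emb h"] by simp
  then show False using nt B z unfolding t_def by force
qed

theorem proposition2p1:
  assumes "connected_shape S"
    and "hole_point S h"
  shows "\<exists>v1\<in>S. \<exists>v2\<in>S. \<exists>ps. shortest_path ps v1 v2 \<and> h \<in> set ps"
proof -
  obtain a where a: "a > 0" "(fst h + (-1) * a, snd h) \<in> S" using ray[OF assms(2), of "-1"] by auto
  obtain b where b: "b > 0" "(fst h + 1 * b, snd h) \<in> S" using ray[OF assms(2), of 1] by auto
  obtain ps where "shortest_path ps (fst h - a, snd h) (fst h + b, snd h)" "(fst h, snd h) \<in> set ps"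
    using line_shortest[OF a(1) b(1)] by blast
  moreover have "(fst h - a, snd h) \<in> S" "(fst h + b, snd h) \<in> S" using a b by simp_all
  ultimately show ?thesis by auto
qed

end
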